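(* Let $s,y\in\mathbb{R}^n$ with $s^Ty>0$, and for $\tau\in[0,1]$ and $\alpha>0$ define $$\phi_\tau(\alpha)=\Big\|\tau\Big(\tfrac{1}{\alpha}s-y\Big)+(1-\tau)(s-\alpha y)\Big\|^2 .$$ Let $\alpha^{BB1}=\dfrac{s^Ts}{s^Ty}$ and $\alpha^{BB2}=\dfrac{s^Ty}{y^Ty}$. For each $\tau\in[0,1]$, the equation $\phi_\tau'(\alpha)=0$ has a unique root $\alpha(\tau)$ in $[\alpha^{BB2},\alpha^{BB1}]$. Then $\tau\mapsto\alpha(\tau)$ is monotone on $[0,1]$.
   Context: $\|\cdot\|$ is the Euclidean norm and $\phi_\tau'$ is the derivative of $\phi_\tau$ with respect to $\alpha$. *)

theory Defs
  imports "HOL-Analysis.Analysis"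
begin

definition phi :: "real^'n \<Rightarrow> real^'n \<Rightarrow> real \<Rightarrow> real \<Rightarrow> real" where
  "phi s y \<tau> \<alpha> = (norm (\<tau> *\<^sub>R ((1 / \<alpha>) *\<^sub>R s - y) + (1 - \<tau>) *\<^sub>R (s - \<alpha> *\<^sub>R y)))\<^sup>2"

definition alpha_BB1 :: "real^'n \<Rightarrow> real^'n \<Rightarrow> real" where
  "alpha_BB1 s y = (s \<bullet> s) / (s \<bullet> y)"

definition alpha_BB2 :: "real^'n \<Rightarrow> real^'n \<Rightarrow> real" where
  "alpha_BB2 s y = (s \<bullet> y) / (y \<bullet> y)"

definition alpha_root :: "real^'n \<Rightarrow> real^'n \<Rightarrow> real \<Rightarrow> real" where
  "alpha_root s y \<tau> = (THE a. a \<in> {alpha_BB2 s y..alpha_BB1 s y} \<and> deriv (phi s y \<tau>) a = 0)"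

end

theory Submission
  imports Defs
begin

lemma phi_expand:
  fixes s y :: "real^'n"
  shows "phi s y t x = (t/x+1-t)^2*(s\<bullet>s) - 2*(t/x+1-t)*(t+(1-t)*x)*(s\<bullet>y) + (t+(1-t)*x)^2*(y\<bullet>y)"
proof -
  have v: "t *\<^sub>R ((1 / x) *\<^sub>R s - y) + (1 - t) *\<^sub>R (s - x *\<^sub>R y)
      = (t/x+1-t) *\<^sub>R s - (t+(1-t)*x) *\<^sub>R y"
    by (simp add: algebra_simps scaleR_diff_right)
  show ?thesis
    unfolding phi_def v power2_norm_eq_inner
    apply (simp add: inner_diff_left inner_diff_right inner_commute power2_eq_square)
    done
qed

lemma phi_deriv:
  fixes s y :: "real^'n"
  assumes x: "x > 0"
  shows "deriv (phi s y t) x = 2*(t/x+1-t)*((1-t)*x^2*((y\<bullet>y)*x-(s\<bullet>y)) + t*((s\<bullet>y)*x-(s\<bullet>s)))/x^2"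
proof -
  define a where "a = s\<bullet>s"
  define b where "b = s\<bullet>y"
  define c where "c = y\<bullet>y"
  have e: "phi s y t = (\<lambda>x. (t/x+1-t)^2*a - 2*(t/x+1-t)*(t+(1-t)*x)*b + (t+(1-t)*x)^2*c)"
    using phi_expand a_def b_def c_def by blast
  have "((\<lambda>x. (t/x+1-t)^2*a - 2*(t/x+1-t)*(t+(1-t)*x)*b + (t+(1-t)*x)^2*c) has_real_derivative
     2*(t/x+1-t)*((1-t)*x^2*(c*x-b) + t*(b*x-a))/x^2) (at x)"
    using x apply (auto intro!: derivative_eq_intros)
    by (simp add: field_simps power2_eq_square)
  then show ?thesis unfolding e a_def b_def c_def by (rule DERIV_imp_deriv)
qed

lemma H_strict:
  fixes a b c t x1 x2 :: real
  assumes b: "b > 0" and c: "c > 0" and t: "0 \<le> t" "t \<le> 1" and x: "b/c \<le> x1" "x1 < x2"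
  shows "(1-t)*x1^2*(c*x1-b) + t*(b*x1-a) < (1-t)*x2^2*(c*x2-b) + t*(b*x2-a)"
proof -
  have x1p: "x1 > 0" using x b c by (smt (verit) divide_pos_pos)
  have d1: "c*x1 - b \<ge> 0" using x c by (simp add: field_simps)
  have sq: "x1^2 < x2^2" using x1p x by (simp add: power_strict_mono)
  have "c*x1 - b < c*x2 - b" using x c by simp
  have A: "x1^2*(c*x1-b) < x2^2*(c*x2-b)"
  proof -
    have "x1^2*(c*x1-b) \<le> x2^2*(c*x1-b)" using sq d1 by (simp add: mult_right_mono)
    also have "\<dots> < x2^2*(c*x2-b)" using x1p x c by (simp add: mult_strict_left_mono)
    finally show ?thesis .
  qed
  have B: "b*x1 - a < b*x2 - a" using b x by simp
  have "(1-t)*(x1^2*(c*x1-b)) \<le> (1-t)*(x2^2*(c*x2-b))" using A t by (simp add: mult_left_mono)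
  moreover have "t*(b*x1-a) \<le> t*(b*x2-a)" using B t by (simp add: mult_left_mono)
  moreover have "(1-t)*(x1^2*(c*x1-b)) < (1-t)*(x2^2*(c*x2-b)) \<or> t*(b*x1-a) < t*(b*x2-a)"
    using A B t by (cases "t = 1") auto
  ultimately show ?thesis by (simp add: mult.assoc) linarith
qed

lemma H_anti:
  fixes a b c t1 t2 x :: real
  assumes b: "b > 0" and c: "c > 0" and t: "t1 \<le> t2" and x: "b/c \<le> x" "x \<le> a/b"
  shows "(1-t2)*x^2*(c*x-b) + t2*(b*x-a) \<le> (1-t1)*x^2*(c*x-b) + t1*(b*x-a)"
proof -
  have "c*x-b \<ge> 0" using x c by (simp add: field_simps)
  then have A: "x^2*(c*x-b) \<ge> 0" by simp
  have B: "b*x-a \<le> 0" using x b by (simp add: field_simps)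
  have "(t2-t1)*((b*x-a) - x^2*(c*x-b)) \<le> 0" using A B t by (simp add: mult_nonneg_nonpos)
  then show ?thesis by (simp add: algebra_simps)
qed

theorem proposition2:
  fixes s y :: "real^'n"
  assumes "s \<bullet> y > 0"
  shows "(\<forall>\<tau>\<in>{0..1}. \<exists>!a. a \<in> {alpha_BB2 s y..alpha_BB1 s y} \<and> deriv (phi s y \<tau>) a = 0)
         \<and> mono_on {0..1} (alpha_root s y)"
proof -
  define a where "a = s\<bullet>s"
  define b where "b = s\<bullet>y"
  define c where "c = y\<bullet>y"
  define H where "H = (\<lambda>t x. (1-t)*x^2*(c*x-b) + t*(b*x-a))"
  have b: "b > 0" using assms b_def by simp
  have "y \<noteq> 0" using assms by auto
  then have c: "c > 0" unfolding c_def by simp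
  have "\<bar>s \<bullet> y\<bar> \<le> norm s * norm y" by (rule Cauchy_Schwarz_ineq2)
  then have "b^2 \<le> (norm s * norm y)^2" using b b_def by (simp add: power_mono)
  then have cs: "b^2 \<le> a*c" unfolding a_def c_def by (simp add: power_mult_distrib dot_square_norm)
  have BB2: "alpha_BB2 s y = b/c" unfolding alpha_BB2_def b_def c_def ..
  have BB1: "alpha_BB1 s y = a/b" unfolding alpha_BB1_def b_def a_def ..
  have LU: "b/c \<le> a/b" using cs b c by (simp add: field_simps power2_eq_square)
  have Lpos: "b/c > 0" using b c by simp
  have iff: "deriv (phi s y t) x = 0 \<longleftrightarrow> H t x = 0" if t: "0 \<le> t" "t \<le> 1" and x: "x > 0" for t x
  proof -
    have p: "t/x + 1 - t > 0"
    proof (cases "t = 1")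
      case True then show ?thesis using x by simp
    next
      case False
      have "t/x \<ge> 0" using t x by simp
      then show ?thesis using False t by linarith
    qed
    show ?thesis using phi_deriv[OF x, of s y t] p x unfolding H_def a_def b_def c_def by simp
  qed
  have ex1: "\<exists>!r. r \<in> {b/c..a/b} \<and> H t r = 0" if t: "0 \<le> t" "t \<le> 1" for t
  proof -
    have h1: "H t (b/c) \<le> 0"
    proof -
      have "b*(b/c) - a \<le> 0" using cs c b by (simp add: field_simps power2_eq_square)
      then have "t*(b*(b/c) - a) \<le> 0" using t by (simp add: mult_nonneg_nonpos)
      then show ?thesis unfolding H_def using c by simp
    qed
    have h2: "H t (a/b) \<ge> 0"
    proof -
      have "c*(a/b) - b \<ge> 0" using cs c b by (simp add: field_simps power2_eq_square)
      then show ?thesis unfolding H_def using t c b by simp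
    qed
    have "\<exists>r\<ge>b/c. r \<le> a/b \<and> H t r = 0"
      apply (rule IVT[OF h1 h2 LU])
      unfolding H_def by (intro allI impI continuous_intros)
    then obtain r where r: "r \<in> {b/c..a/b}" "H t r = 0" by auto
    show ?thesis
    proof (rule ex1I[of _ r])
      show "r \<in> {b/c..a/b} \<and> H t r = 0" using r by simp
    next
      fix r' assume r': "r' \<in> {b/c..a/b} \<and> H t r' = 0"
      show "r' = r"
      proof (rule ccontr)
        assume "r' \<noteq> r"
        then consider "r' < r" | "r < r'" by linarith
        then show False
        proof cases
          case 1 then show False using H_strict[OF b c t, of r' r a] r r' unfolding H_def by simp
        next
          case 2 then show False using H_strict[OF b c t, of r r' a] r r' unfolding H_def by simp
        qed
      qed
    qed
  qed
  have eq: "(r \<in> {alpha_BB2 s y..alpha_BB1 s y} \<and> deriv (phi s y t) r = 0) \<longleftrightarrow>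
      (r \<in> {b/c..a/b} \<and> H t r = 0)" if t: "0 \<le> t" "t \<le> 1" for t r
  proof (cases "r \<in> {b/c..a/b}")
    case True
    then have "r > 0" using Lpos by simp
    then show ?thesis using iff[OF t] True BB1 BB2 by simp
  qed (auto simp add: BB1 BB2)
  have P1: "\<forall>\<tau>\<in>{0..1}. \<exists>!a. a \<in> {alpha_BB2 s y..alpha_BB1 s y} \<and> deriv (phi s y \<tau>) a = 0"
    using ex1 eq by simp
  have root: "alpha_root s y t \<in> {b/c..a/b} \<and> H t (alpha_root s y t) = 0" if t: "0 \<le> t" "t \<le> 1" for t
  proof -
    have "alpha_root s y t = (THE r. r \<in> {b/c..a/b} \<and> H t r = 0)"
      unfolding alpha_root_def using eq[OF t] by simp
    then show ?thesis using theI'[OF ex1[OF t]] by simp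
  qed
  have P2: "mono_on {0..1} (alpha_root s y)"
  proof (rule mono_onI)
    fix t1 t2 :: real assume t1: "t1 \<in> {0..1}" and t2: "t2 \<in> {0..1}" and le: "t1 \<le> t2"
    define r1 where "r1 = alpha_root s y t1"
    define r2 where "r2 = alpha_root s y t2"
    have R1: "r1 \<in> {b/c..a/b}" "H t1 r1 = 0" using root t1 r1_def by auto
    have R2: "r2 \<in> {b/c..a/b}" "H t2 r2 = 0" using root t2 r2_def by auto
    show "r1 \<le> r2"
    proof (rule ccontr)
      assume "\<not> r1 \<le> r2"
      then have "r2 < r1" by simp
      then have "H t2 r2 < H t2 r1" using H_strict[OF b c, of t2 r2 r1 a] t2 R2 unfolding H_def by simp
      also have "\<dots> \<le> H t1 r1" using H_anti[OF b c le, of r1 a] R1 unfolding H_def by simp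
      finally show False using R1 R2 by simp
    qed
  qed
  show ?thesis using P1 P2 by simp
qed

end
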